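(* Let $p$ be the POP of length 5 defined by the relations $1>2$, $1>3$, $4>2$ and $4>3$ (label $5$ isolated), and let $a(n)=|S_n(p)|$. Then $$\sum_{n\geq 0}a(n)x^n=\frac{1-7x+14x^2-6x^3+4x^4}{(1-4x+2x^2)^2}.$$
   Context: An $n$-permutation is a word $\pi=\pi_1\cdots\pi_n$ containing each of $1,\ldots,n$ exactly once; $S_n$ is the set of $n$-permutations ($S_0$ consists of the empty permutation). A partially ordered pattern (POP) $p$ of length $k$ is a partial order on the label set $\{1,\ldots,k\}$; it is described by a set of generating relations, where a relation $x>y$ means that in an occurrence the entry in the $x$-th chosen position must be larger than the entry in the $y$-th chosen position, and labels not involved in any relation are unconstrained. An $n$-permutation $\pi$ contains $p$ if there are indices $1\leq i_1<\cdots<i_k\leq n$ such that $\pi_{i_x}>\pi_{i_y}$ whenever $x>y$ in the partial order; otherwise $\pi$ avoids $p$. $S_n(p)$ denotes the set of $n$-permutations avoiding $p$. *)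

theory Defs
  imports Main "HOL-Computational_Algebra.Formal_Power_Series"
begin

definition perms :: "nat \<Rightarrow> nat list set" where
  "perms n = {\<pi>. distinct \<pi> \<and> set \<pi> = {1..n}}"

text \<open>A POP of length k is given by its length k and a set R of generating relations;
  (x, y) \<in> R encodes the relation x > y between labels x, y \<in> {1..k}.  Positions are 1-based, so
  \<pi>_j is \<pi> ! (j - 1).\<close>
definition contains_pop :: "nat list \<Rightarrow> nat \<Rightarrow> (nat \<times> nat) set \<Rightarrow> bool" where
  "contains_pop \<pi> k R \<longleftrightarrow>
     (\<exists>i :: nat \<Rightarrow> nat. strict_mono_on {1..k} i \<and> i ` {1..k} \<subseteq> {1..length \<pi>} \<and>
        (\<forall>(x, y) \<in> R. \<pi> ! (i x - 1) > \<pi> ! (i y - 1)))"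

definition avoiding_perms :: "nat \<Rightarrow> nat \<Rightarrow> (nat \<times> nat) set \<Rightarrow> nat list set" where
  "avoiding_perms n k R = {\<pi> \<in> perms n. \<not> contains_pop \<pi> k R}"

definition pop45 :: "(nat \<times> nat) set" where
  "pop45 = {(1, 2), (1, 3), (4, 2), (4, 3)}"

end

theory Submission
  imports Defs
begin


definition occ :: "nat list \<Rightarrow> bool" where
  "occ xs \<longleftrightarrow> (\<exists>a b c d. a<b \<and> b<c \<and> c<d \<and> d<length xs \<and> xs!b < xs!a \<and> xs!c < xs!a
      \<and> xs!b < xs!d \<and> xs!c < xs!d)"

definition Av :: "nat set \<Rightarrow> nat list set" where
  "Av S = {xs. distinct xs \<and> set xs = S \<and> \<not> occ xs}"

definition lowset :: "nat \<Rightarrow> nat set \<Rightarrow> bool" where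
  "lowset x X \<longleftrightarrow> (\<forall>y\<in>X. \<forall>z\<in>X. y < x \<longrightarrow> z < x \<longrightarrow> y = z)"

lemma occ_Cons: "occ xs \<Longrightarrow> occ (x#xs)"
  unfolding occ_def
  apply (elim exE conjE)
  subgoal for a b c d by (rule exI[of _ "Suc a"], rule exI[of _ "Suc b"], rule exI[of _ "Suc c"],
        rule exI[of _ "Suc d"]) simp
  done

lemma occ_snoc: "occ xs \<Longrightarrow> occ (xs@[x])"
  unfolding occ_def
  apply (elim exE conjE)
  subgoal for a b c d by (rule exI[of _ a], rule exI[of _ b], rule exI[of _ c],
        rule exI[of _ d]) (simp add: nth_append)
  done

lemma not_occ_Cons:
  assumes "\<not> occ xs" "distinct xs" "lowset x (set xs)"
  shows "\<not> occ (x#xs)"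
proof
  assume "occ (x#xs)"
  then obtain a b c d where h: "a<b" "b<c" "c<d" "d<length (x#xs)" "(x#xs)!b < (x#xs)!a"
    "(x#xs)!c < (x#xs)!a" "(x#xs)!b < (x#xs)!d" "(x#xs)!c < (x#xs)!d"
    unfolding occ_def by blast
  obtain b' c' d' where bcd: "b = Suc b'" "c = Suc c'" "d = Suc d'" using h
    by (metis Suc_pred gr0I not_less0 less_trans)
  show False
  proof (cases a)
    case 0
    have "xs!b' < x" "xs!c' < x" "b' < length xs" "c' < length xs" using h bcd 0 by auto
    hence "xs!b' = xs!c'" using assms(3) unfolding lowset_def by auto
    hence "b' = c'" using assms(2) \<open>b' < length xs\<close> \<open>c' < length xs\<close> nth_eq_iff_index_eq by blast
    thus False using h bcd by simp
  next
    case (Suc a')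
    have "occ xs" unfolding occ_def
      by (rule exI[of _ a'], rule exI[of _ b'], rule exI[of _ c'], rule exI[of _ d'])
        (use h bcd Suc in simp)
    thus False using assms(1) by simp
  qed
qed

lemma not_occ_snoc:
  assumes "\<not> occ xs" "distinct xs" "lowset x (set xs)"
  shows "\<not> occ (xs@[x])"
proof
  assume "occ (xs@[x])"
  then obtain a b c d where h: "a<b" "b<c" "c<d" "d<length (xs@[x])" "(xs@[x])!b < (xs@[x])!a"
    "(xs@[x])!c < (xs@[x])!a" "(xs@[x])!b < (xs@[x])!d" "(xs@[x])!c < (xs@[x])!d"
    unfolding occ_def by blast
  show False
  proof (cases "d = length xs")
    case True
    have "xs!b < x" "xs!c < x" "b < length xs" "c < length xs" using h True by (auto simp: nth_append)
    hence "xs!b = xs!c" using assms(3) unfolding lowset_def by auto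
    hence "b = c" using assms(2) \<open>b < length xs\<close> \<open>c < length xs\<close> nth_eq_iff_index_eq by blast
    thus False using h by simp
  next
    case False
    have "occ xs" unfolding occ_def
      by (rule exI[of _ a], rule exI[of _ b], rule exI[of _ c], rule exI[of _ d])
        (use h False in \<open>auto simp: nth_append\<close>)
    thus False using assms(1) by simp
  qed
qed

lemma key:
  assumes "\<not> occ xs" "distinct xs" "s1 \<in> set xs" "s2 \<in> set xs" "s1 \<noteq> s2"
    "\<And>y. y \<in> set xs \<Longrightarrow> y \<noteq> s1 \<Longrightarrow> y \<noteq> s2 \<Longrightarrow> s1 < y \<and> s2 < y"
  shows "hd xs \<in> {s1, s2} \<or> last xs \<in> {s1, s2}"
proof (rule ccontr)
  assume nh: "\<not> ?thesis"
  obtain i where i: "i < length xs" "xs!i = s1" using assms(3) by (metis in_set_conv_nth)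
  obtain j where j: "j < length xs" "xs!j = s2" using assms(4) by (metis in_set_conv_nth)
  have ne: "xs \<noteq> []" using assms(3) by auto
  have hd: "hd xs = xs!0" using ne by (simp add: hd_conv_nth)
  have lt: "last xs = xs!(length xs - 1)" using ne by (simp add: last_conv_nth)
  have "i \<noteq> j" using i j assms(5) by auto
  have i0: "i \<noteq> 0" "j \<noteq> 0" using nh hd i j by (metis insertCI)+
  have il: "i \<noteq> length xs - 1" "j \<noteq> length xs - 1" using nh lt i j by (metis insertCI)+
  have v0: "s1 < xs!0 \<and> s2 < xs!0" using assms(6)[of "xs!0"] nh hd ne by auto
  have vl: "s1 < xs!(length xs - 1) \<and> s2 < xs!(length xs - 1)"
    using assms(6)[of "xs!(length xs - 1)"] nh lt ne by auto
  have "occ xs" unfolding occ_def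
    apply (rule exI[of _ 0], rule exI[of _ "min i j"], rule exI[of _ "max i j"],
        rule exI[of _ "length xs - 1"])
    using i j i0 il v0 vl \<open>i \<noteq> j\<close> by (auto simp: min_def max_def)
  thus False using assms(1) by simp
qed

lemma finite_Av: "finite S \<Longrightarrow> finite (Av S)"
  by (rule finite_subset[OF _ finite_lists_length_eq[of S "card S"]])
    (auto simp: Av_def distinct_card)


lemma distinct_single: "distinct xs \<Longrightarrow> set xs = {x} \<Longrightarrow> xs = [x]"
proof -
  assume a: "distinct xs" "set xs = {x}"
  hence "length xs = 1" using distinct_card by fastforce
  then obtain y where "xs = [y]" by (cases xs) auto
  thus ?thesis using a by simp
qed

fun f :: "nat \<Rightarrow> int" where
  "f 0 = 1" | "f (Suc 0) = 1" | "f (Suc (Suc n)) = 4 * f (Suc n) - 2 * f n"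


lemma card_Av: "finite S \<Longrightarrow> int (card (Av S)) = f (card S)"
proof (induction "card S" arbitrary: S rule: less_induct)
  case less
  show ?case
  proof (cases "card S")
    case 0
    hence "S = {}" using less.prems by simp
    hence "Av S = {[]}" by (auto simp: Av_def occ_def)
    thus ?thesis using 0 by simp
  next
    case (Suc k)
    show ?thesis
    proof (cases k)
      case 0
      then obtain x where "S = {x}" using Suc card_1_singletonE by auto
      hence "Av S = {[x]}"
        by (auto simp: Av_def occ_def intro: distinct_single)
      thus ?thesis using Suc 0 by simp
    next
      case (Suc m)
      have cS: "card S = Suc (Suc m)" using \<open>card S = Suc k\<close> Suc by simp
      have fin: "finite S" by fact
      have ne: "S \<noteq> {}" using cS by auto
      define s1 where "s1 = Min S"
      have s1S: "s1 \<in> S" using fin ne s1_def by simp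
      have s1m: "\<And>y. y \<in> S \<Longrightarrow> s1 \<le> y" using fin s1_def by simp
      have c1: "card (S - {s1}) = Suc m" using cS s1S fin by simp
      have ne2: "S - {s1} \<noteq> {}" using c1 by (metis card.empty Zero_not_Suc)
      define s2 where "s2 = Min (S - {s1})"
      have s2S: "s2 \<in> S - {s1}" unfolding s2_def by (rule Min_in) (use fin ne2 in auto)
      have s2m: "\<And>y. y \<in> S - {s1} \<Longrightarrow> s2 \<le> y" using fin s2_def by simp
      have s12: "s1 < s2" using s1m[of s2] s2S by auto
      have big: "s1 < y \<and> s2 < y" if "y \<in> S" "y \<noteq> s1" "y \<noteq> s2" for y
        using s1m[of y] s2m[of y] that by auto
      have c2: "card (S - {s2}) = Suc m" using cS s2S fin by simp
      have c12: "card (S - {s1} - {s2}) = m" using c1 s2S fin by simp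
      have IH1: "int (card (Av (S - {s1}))) = f (Suc m)"
        using less.hyps[of "S - {s1}"] c1 cS fin by simp
      have IH2: "int (card (Av (S - {s2}))) = f (Suc m)"
        using less.hyps[of "S - {s2}"] c2 cS fin by simp
      have IH3: "int (card (Av (S - {s1} - {s2}))) = f m"
        using less.hyps[of "S - {s1} - {s2}"] c12 cS fin by simp
      have lowA: "lowset s1 X" if "X \<subseteq> S" for X
        unfolding lowset_def
      proof (intro ballI impI)
        fix y z assume "y \<in> X" "z \<in> X" "y < s1" "z < s1"
        thus "y = z" using that s1m[of y] by auto
      qed
      have lowB: "lowset s2 X" if "X \<subseteq> S" for X
        unfolding lowset_def
      proof (intro ballI impI)
        fix y z assume "y \<in> X" "z \<in> X" "y < s2" "z < s2"
        hence "y = s1" "z = s1" using that s2m[of y] s2m[of z] by auto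
        thus "y = z" by simp
      qed
      have lenS: "length xs = Suc (Suc m)" if "xs \<in> Av S" for xs
        using that cS by (auto simp: Av_def distinct_card[symmetric])
      define L where "L = {xs \<in> Av S. hd xs \<in> {s1, s2}}"
      define R where "R = {xs \<in> Av S. last xs \<in> {s1, s2}}"
      have AvLR: "Av S = L \<union> R"
      proof -
        have "xs \<in> L \<union> R" if "xs \<in> Av S" for xs
          using key[of xs s1 s2] that s1S s2S s12 big unfolding L_def R_def Av_def by auto
        thus ?thesis unfolding L_def R_def by auto
      qed
      have Leq: "L = Cons s1 ` Av (S - {s1}) \<union> Cons s2 ` Av (S - {s2})"
      proof (intro equalityI subsetI)
        fix xs assume "xs \<in> L"
        hence xs: "xs \<in> Av S" "hd xs \<in> {s1, s2}" unfolding L_def by auto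
        obtain y ys where yy: "xs = y # ys" using lenS[OF xs(1)] by (cases xs) auto
        have "ys \<in> Av (S - {y})" using xs yy occ_Cons unfolding Av_def by auto
        thus "xs \<in> Cons s1 ` Av (S - {s1}) \<union> Cons s2 ` Av (S - {s2})" using xs yy by auto
      next
        fix xs assume "xs \<in> Cons s1 ` Av (S - {s1}) \<union> Cons s2 ` Av (S - {s2})"
        then obtain y ys where yy: "xs = y # ys" "y \<in> {s1, s2}" "ys \<in> Av (S - {y})" by auto
        have "lowset y (set ys)" using yy lowA lowB unfolding Av_def by auto
        hence "xs \<in> Av S" using yy not_occ_Cons[of ys y] s1S s2S unfolding Av_def by auto
        thus "xs \<in> L" using yy unfolding L_def by simp
      qed
      have Req: "R = (\<lambda>ys. ys @ [s1]) ` Av (S - {s1}) \<union> (\<lambda>ys. ys @ [s2]) ` Av (S - {s2})"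
      proof (intro equalityI subsetI)
        fix xs assume "xs \<in> R"
        hence xs: "xs \<in> Av S" "last xs \<in> {s1, s2}" unfolding R_def by auto
        obtain y ys where yy: "xs = ys @ [y]" using lenS[OF xs(1)] by (cases xs rule: rev_cases) auto
        have "ys \<in> Av (S - {y})" using xs yy occ_snoc unfolding Av_def by auto
        thus "xs \<in> (\<lambda>ys. ys @ [s1]) ` Av (S - {s1}) \<union> (\<lambda>ys. ys @ [s2]) ` Av (S - {s2})"
          using xs yy by auto
      next
        fix xs assume "xs \<in> (\<lambda>ys. ys @ [s1]) ` Av (S - {s1}) \<union> (\<lambda>ys. ys @ [s2]) ` Av (S - {s2})"
        then obtain y ys where yy: "xs = ys @ [y]" "y \<in> {s1, s2}" "ys \<in> Av (S - {y})" by auto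
        have "lowset y (set ys)" using yy lowA lowB unfolding Av_def by auto
        hence "xs \<in> Av S" using yy not_occ_snoc[of ys y] s1S s2S unfolding Av_def by auto
        thus "xs \<in> R" using yy unfolding R_def by simp
      qed
      have LRI: "L \<inter> R = (\<lambda>ys. s1 # ys @ [s2]) ` Av (S - {s1} - {s2}) \<union>
                           (\<lambda>ys. s2 # ys @ [s1]) ` Av (S - {s1} - {s2})"
      proof (intro equalityI subsetI)
        fix xs assume "xs \<in> L \<inter> R"
        hence xs: "xs \<in> Av S" "hd xs \<in> {s1, s2}" "last xs \<in> {s1, s2}"
          unfolding L_def R_def by auto
        obtain y zs where yy: "xs = y # zs" using lenS[OF xs(1)] by (cases xs) auto
        have "zs \<noteq> []" using lenS[OF xs(1)] yy by auto
        then obtain t ws where tt: "zs = ws @ [t]" by (cases zs rule: rev_cases) auto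
        have d: "distinct (y # ws @ [t])" "set (y # ws @ [t]) = S" "\<not> occ (y # ws @ [t])"
          using xs(1) yy tt unfolding Av_def by auto
        have "y \<noteq> t" "y \<notin> set ws" "t \<notin> set ws" "distinct ws" using d(1) by auto
        have "\<not> occ ws" using d(3) occ_Cons occ_snoc by blast
        moreover have "set ws = S - {y} - {t}" using d(2) \<open>y \<notin> set ws\<close> \<open>t \<notin> set ws\<close> by auto
        ultimately have ws: "ws \<in> Av (S - {y} - {t})" using \<open>distinct ws\<close> unfolding Av_def by simp
        have hy: "y \<in> {s1, s2}" "t \<in> {s1, s2}" using xs yy tt by auto
        have sw: "S - {s2} - {s1} = S - {s1} - {s2}" by blast
        from hy \<open>y \<noteq> t\<close> have "y = s1 \<and> t = s2 \<or> y = s2 \<and> t = s1" by auto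
        thus "xs \<in> (\<lambda>ys. s1 # ys @ [s2]) ` Av (S - {s1} - {s2}) \<union>
                           (\<lambda>ys. s2 # ys @ [s1]) ` Av (S - {s1} - {s2})"
        proof (elim disjE conjE)
          assume "y = s1" "t = s2"
          thus ?thesis using ws yy tt by simp
        next
          assume "y = s2" "t = s1"
          thus ?thesis using ws yy tt sw by simp
        qed
      next
        fix xs assume "xs \<in> (\<lambda>ys. s1 # ys @ [s2]) ` Av (S - {s1} - {s2}) \<union>
                           (\<lambda>ys. s2 # ys @ [s1]) ` Av (S - {s1} - {s2})"
        then obtain y t ws where yy: "xs = y # ws @ [t]" "y = s1 \<and> t = s2 \<or> y = s2 \<and> t = s1"
          "ws \<in> Av (S - {s1} - {s2})" by auto
        have ws: "distinct ws" "set ws = S - {s1} - {s2}" "\<not> occ ws" using yy(3) unfolding Av_def by auto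
        have sub: "set ws \<subseteq> S" using ws(2) by auto
        have sub2: "set (ws @ [t]) \<subseteq> S" using sub yy(2) s1S s2S by auto
        have "lowset t (set ws)" using yy(2) lowA[OF sub] lowB[OF sub] by auto
        hence o1: "\<not> occ (ws @ [t])" using not_occ_snoc ws by blast
        have "lowset y (set (ws @ [t]))" using yy(2) lowA[OF sub2] lowB[OF sub2] by auto
        hence o2: "\<not> occ (y # ws @ [t])" using not_occ_Cons[OF o1] ws yy(2) s12 by auto
        have "distinct (y # ws @ [t])" using ws yy(2) s12 by auto
        moreover have "set (y # ws @ [t]) = S" using ws yy(2) s1S s2S by auto
        ultimately have "xs \<in> Av S" using yy(1) o2 unfolding Av_def by simp
        moreover have "hd xs \<in> {s1, s2}" "last xs \<in> {s1, s2}" using yy by auto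
        ultimately show "xs \<in> L \<inter> R" unfolding L_def R_def by auto
      qed
      have finA: "finite (Av X)" if "X \<subseteq> S" for X using finite_Av finite_subset that fin by blast
      have fA: "finite (Av (S - {s1}))" "finite (Av (S - {s2}))" "finite (Av (S - {s1} - {s2}))"
        by (rule finA, blast)+
      have cL: "card L = card (Av (S - {s1})) + card (Av (S - {s2}))"
        unfolding Leq
        by (subst card_Un_disjoint) (auto simp: card_image fA s12[THEN less_imp_neq])
      have cR: "card R = card (Av (S - {s1})) + card (Av (S - {s2}))"
        unfolding Req
        by (subst card_Un_disjoint) (auto simp: card_image fA s12[THEN less_imp_neq] inj_on_def)
      have cLR: "card (L \<inter> R) = card (Av (S - {s1} - {s2})) + card (Av (S - {s1} - {s2}))"
        unfolding LRI
        by (subst card_Un_disjoint) (auto simp: card_image fA s12[THEN less_imp_neq] inj_on_def)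
      have finLR: "finite L" "finite R" unfolding L_def R_def using finA by auto
      have "card L + card R = card (L \<union> R) + card (L \<inter> R)" using card_Un_Int finLR by blast
      hence "int (card (Av S)) = int (card L) + int (card R) - int (card (L \<inter> R))"
        using AvLR by simp
      also have "\<dots> = 4 * f (Suc m) - 2 * f m" using cL cR cLR IH1 IH2 IH3 by simp
      finally show ?thesis using cS by simp
    qed
  qed
qed



lemma pop_iff: "contains_pop \<pi> 5 pop45 \<longleftrightarrow> occ (butlast \<pi>)"
proof
  assume "contains_pop \<pi> 5 pop45"
  then obtain i where sm: "strict_mono_on {1..5} i" and im: "i ` {1..5} \<subseteq> {1..length \<pi>}"
    and rel: "\<forall>(x, y) \<in> pop45. \<pi> ! (i x - 1) > \<pi> ! (i y - 1)"
    unfolding contains_pop_def by blast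
  have m: "i 1 < i 2" "i 2 < i 3" "i 3 < i 4" "i 4 < i 5"
    using sm unfolding strict_mono_on_def by auto
  have im': "\<forall>x\<in>{1..5}. i x \<in> {1..length \<pi>}" using im by (simp add: image_subset_iff)
  have r: "i 1 \<ge> 1" "i 5 \<le> length \<pi>" using im'[rule_format, of 1] im'[rule_format, of 5] by auto
  have v: "\<pi> ! (i 1 - 1) > \<pi> ! (i 2 - 1)" "\<pi> ! (i 1 - 1) > \<pi> ! (i 3 - 1)"
     "\<pi> ! (i 4 - 1) > \<pi> ! (i 2 - 1)" "\<pi> ! (i 4 - 1) > \<pi> ! (i 3 - 1)"
    using rel unfolding pop45_def by auto
  have lb: "length (butlast \<pi>) = length \<pi> - 1" by simp
  have nb: "butlast \<pi> ! k = \<pi> ! k" if "k < length \<pi> - 1" for k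
    using that by (simp add: nth_butlast)
  define a where "a = i 1 - 1"
  define b where "b = i 2 - 1"
  define c where "c = i 3 - 1"
  define d where "d = i 4 - 1"
  have o: "a < b" "b < c" "c < d" "d < length \<pi> - 1" unfolding a_def b_def c_def d_def using m r by linarith+
  have "a < length \<pi> - 1" "b < length \<pi> - 1" "c < length \<pi> - 1" using o by linarith+
  hence vv: "butlast \<pi> ! a = \<pi> ! a" "butlast \<pi> ! b = \<pi> ! b" "butlast \<pi> ! c = \<pi> ! c"
    "butlast \<pi> ! d = \<pi> ! d" using nb o by auto
  have v': "\<pi>!b < \<pi>!a" "\<pi>!c < \<pi>!a" "\<pi>!b < \<pi>!d" "\<pi>!c < \<pi>!d"
    using v unfolding a_def b_def c_def d_def by simp_all
  show "occ (butlast \<pi>)" unfolding occ_def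
    apply (rule exI[of _ a], rule exI[of _ b], rule exI[of _ c], rule exI[of _ d])
    using o v' unfolding vv lb by simp
next
  assume "occ (butlast \<pi>)"
  then obtain a b c d where h: "a<b" "b<c" "c<d" "d<length (butlast \<pi>)"
    "butlast \<pi>!b < butlast \<pi>!a" "butlast \<pi>!c < butlast \<pi>!a"
    "butlast \<pi>!b < butlast \<pi>!d" "butlast \<pi>!c < butlast \<pi>!d"
    unfolding occ_def by blast
  have h2: "\<pi>!b < \<pi>!a" "\<pi>!c < \<pi>!a" "\<pi>!b < \<pi>!d" "\<pi>!c < \<pi>!d"
    using h by (simp_all add: nth_butlast)
  define i where "i = (\<lambda>x::nat. if x = 1 then a + 1 else if x = 2 then b + 1 else if x = 3 then c + 1
     else if x = 4 then d + 1 else length \<pi>)"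
  have dom: "x \<in> {1..5} \<longleftrightarrow> x = 1 \<or> x = 2 \<or> x = 3 \<or> x = 4 \<or> x = (5::nat)" for x by auto
  have iv: "i (Suc 0) = a+1" "i 1 = a+1" "i 2 = b+1" "i 3 = c+1" "i 4 = d+1" "i 5 = length \<pi>" by (simp_all add: i_def)
  have dl: "d + 1 < length \<pi>" using h(4) by simp
  have "strict_mono_on {1..5} i"
    unfolding strict_mono_on_def dom using h(1-3) dl by (auto simp: iv)
  moreover have "i ` {1..5} \<subseteq> {1..length \<pi>}"
  proof (rule image_subsetI)
    fix x :: nat assume "x \<in> {1..5}"
    hence "x = 1 \<or> x = 2 \<or> x = 3 \<or> x = 4 \<or> x = 5" using dom by blast
    thus "i x \<in> {1..length \<pi>}" using h(1-3) dl by (elim disjE) (auto simp: iv)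
  qed
  moreover have "\<forall>(x, y) \<in> pop45. \<pi> ! (i x - 1) > \<pi> ! (i y - 1)"
    using h2 unfolding pop45_def by (auto simp: iv)
  ultimately show "contains_pop \<pi> 5 pop45" unfolding contains_pop_def by blast
qed

lemma av_perms: "avoiding_perms (Suc n) 5 pop45 = (\<lambda>(v, ys). ys @ [v]) ` (SIGMA v:{1..Suc n}. Av ({1..Suc n} - {v}))"
proof (intro equalityI subsetI)
  fix p assume "p \<in> avoiding_perms (Suc n) 5 pop45"
  hence p: "distinct p" "set p = {1..Suc n}" "\<not> occ (butlast p)"
    unfolding avoiding_perms_def perms_def pop_iff by auto
  have "p \<noteq> []" using p(2) by auto
  then obtain ys v where pv: "p = ys @ [v]" by (cases p rule: rev_cases) auto
  have "ys \<in> Av ({1..Suc n} - {v})" "v \<in> {1..Suc n}" using p pv unfolding Av_def by auto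
  thus "p \<in> (\<lambda>(v, ys). ys @ [v]) ` (SIGMA v:{1..Suc n}. Av ({1..Suc n} - {v}))"
    using pv by auto
next
  fix p assume "p \<in> (\<lambda>(v, ys). ys @ [v]) ` (SIGMA v:{1..Suc n}. Av ({1..Suc n} - {v}))"
  then obtain v ys where pv: "p = ys @ [v]" "v \<in> {1..Suc n}" "ys \<in> Av ({1..Suc n} - {v})" by auto
  have ys: "distinct ys" "set ys = {1..Suc n} - {v}" "\<not> occ ys" using pv(3) unfolding Av_def by auto
  have "distinct p" using ys pv(1) by simp
  moreover have "set p = {1..Suc n}" using ys(2) pv(1,2) by (simp add: insert_absorb)
  moreover have "\<not> occ (butlast p)" using ys pv(1) by simp
  ultimately show "p \<in> avoiding_perms (Suc n) 5 pop45"
    unfolding avoiding_perms_def perms_def pop_iff by simp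
qed

lemma card_perms: "card (avoiding_perms (Suc n) 5 pop45) = Suc n * card (Av {1..n})"
proof -
  have inj: "inj_on (\<lambda>(v, ys). ys @ [v]) (SIGMA v:{1..Suc n}. Av ({1..Suc n} - {v}))"
    by (auto simp: inj_on_def)
  have "card (avoiding_perms (Suc n) 5 pop45) = (\<Sum>v\<in>{1..Suc n}. card (Av ({1..Suc n} - {v})))"
    unfolding av_perms card_image[OF inj]
    by (rule card_SigmaI) (auto intro: finite_Av)
  also have "\<dots> = (\<Sum>v\<in>{1..Suc n}. card (Av {1..n}))"
  proof (rule sum.cong[OF refl])
    fix v assume v: "v \<in> {1..Suc n}"
    have "int (card (Av ({1..Suc n} - {v}))) = f (card ({1..Suc n} - {v}))" by (rule card_Av) simp
    also have "card ({1..Suc n} - {v}) = n" using v by simp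
    also have "f n = int (card (Av {1..n}))" by (subst card_Av) simp_all
    finally show "card (Av ({1..Suc n} - {v})) = card (Av {1..n})" by simp
  qed
  also have "\<dots> = Suc n * card (Av {1..n})" by simp
  finally show ?thesis .
qed

lemma fps_nth_mult_numeral: "fps_nth (g * numeral k) n = fps_nth g n * numeral k"
  by (simp only: fps_numeral_fps_const fps_mult_right_const_nth)

lemma fps_nth_numeral_mult: "fps_nth (numeral k * g) n = numeral k * fps_nth g n"
  by (simp only: fps_numeral_fps_const fps_mult_left_const_nth)

lemma fps_part:
  fixes A :: "nat \<Rightarrow> rat"
  assumes A0: "A 0 = 1" and AS: "\<And>m. A (Suc m) = of_nat (Suc m) * of_int (f m)"
  shows "Abs_fps A = (1 - 7 * fps_X + 14 * fps_X ^ 2 - 6 * fps_X ^ 3 + 4 * fps_X ^ 4)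
      / (1 - 4 * fps_X + 2 * fps_X ^ 2) ^ 2"
proof -
  let ?F = "Abs_fps A"
  let ?N = "(1 - 7 * fps_X + 14 * fps_X ^ 2 - 6 * fps_X ^ 3 + 4 * fps_X ^ 4) :: rat fps"
  let ?D = "(1 - 4 * fps_X + 2 * fps_X ^ 2) ^ 2 :: rat fps"
  have D: "?F * ?D = ?F - 8 * (fps_X ^ 1 * ?F) + 20 * (fps_X ^ 2 * ?F) - 16 * (fps_X ^ 3 * ?F) + 4 * (fps_X ^ 4 * ?F)"
    by (simp add: algebra_simps power2_eq_square power3_eq_cube power4_eq_xxxx)
  have rec: "A (m+5) - 8 * A (m+4) + 20 * A (m+3) - 16 * A (m+2) + 4 * A (m+1) = 0" for m
  proof -
    have e: "m+5 = Suc (m+4)" "m+4 = Suc (m+3)" "m+3 = Suc (m+2)" "m+2 = Suc (m+1)" "m+1 = Suc m" by simp_all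
    have f2: "f (m+2) = 4 * f (m+1) - 2 * f m" by (simp add: e(4) e(5))
    have f3: "f (m+3) = 4 * f (m+2) - 2 * f (m+1)" by (simp add: e(3) e(4) e(5))
    have f4: "f (m+4) = 4 * f (m+3) - 2 * f (m+2)" by (simp add: e)
    have "(m+5) * f (m+4) - 8 * (m+4) * f (m+3) + 20 * (m+3) * f (m+2) - 16 * (m+2) * f (m+1) + 4 * (m+1) * f m = 0"
      unfolding f4 f3 f2 by (simp add: algebra_simps)
    hence "of_int ((m+5) * f (m+4) - 8 * (m+4) * f (m+3) + 20 * (m+3) * f (m+2) - 16 * (m+2) * f (m+1) + 4 * (m+1) * f m) = (0::rat)"
      by simp
    then show ?thesis unfolding e AS by (simp add: algebra_simps)
  qed
  have "?F * ?D = ?N"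
  proof (rule fps_ext)
    fix n
    have f1: "f 1 = 1" "f 2 = 2" "f 3 = 6" by (simp_all add: numeral_eq_Suc)
    show "fps_nth (?F * ?D) n = fps_nth ?N n"
    proof (cases "n \<ge> 5")
      case True
      then obtain m where m: "n = m + 5" by (metis add.commute le_Suc_ex)
      show ?thesis unfolding D using rec[of m]
        by (simp add: m fps_X_power_mult_nth fps_numeral_nth fps_X_power_nth algebra_simps numeral_eq_Suc fps_nth_mult_numeral)
    next
      case False
      then have "n = 0 \<or> n = 1 \<or> n = 2 \<or> n = 3 \<or> n = 4" by auto
      have Av: "A 1 = 1" "A 2 = 2" "A 3 = 6" "A 4 = 24" "A (Suc 0) = 1"
        using AS[of 0] AS[of 1] AS[of 2] AS[of 3] f1 by (simp_all add: numeral_eq_Suc)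
      from \<open>n = 0 \<or> _\<close> show ?thesis unfolding D
        by (elim disjE) (simp_all add: fps_X_power_mult_nth fps_numeral_nth fps_X_power_nth A0 Av fps_nth_numeral_mult del: power_Suc)
    qed
  qed
  moreover have "?D \<noteq> 0"
  proof
    assume "?D = 0" hence "fps_nth ?D 0 = 0" by simp
    thus False by (simp add: power2_eq_square)
  qed
  ultimately show ?thesis by (metis nonzero_mult_div_cancel_right)
qed

lemma av0: "avoiding_perms 0 5 pop45 = {[]}"
proof -
  have p: "perms 0 = {[]}" unfolding perms_def by auto
  have "\<not> contains_pop [] 5 pop45" unfolding contains_pop_def by auto
  thus ?thesis unfolding avoiding_perms_def p by auto
qed

theorem theorem4p5:
  shows "Abs_fps (\<lambda>n. of_nat (card (avoiding_perms n 5 pop45)) :: rat) =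
    (1 - 7 * fps_X + 14 * fps_X ^ 2 - 6 * fps_X ^ 3 + 4 * fps_X ^ 4)
      / (1 - 4 * fps_X + 2 * fps_X ^ 2) ^ 2"
proof (rule fps_part)
  show "rat_of_nat (card (avoiding_perms 0 5 pop45)) = 1" by (simp add: av0)
next
  fix m
  have "int (card (Av {1..m})) = f m" by (subst card_Av) simp_all
  hence "rat_of_int (f m) = of_nat (card (Av {1..m}))" by (metis of_int_of_nat_eq)
  thus "rat_of_nat (card (avoiding_perms (Suc m) 5 pop45)) = of_nat (Suc m) * of_int (f m)"
    by (simp only: card_perms of_nat_mult)
qed

end
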